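(* Let $f_1(z)=\dfrac{2(z^2-\frac34)^3}{z^2(z^2-\frac98)^2}-1$. For every $n\ge1$ and every point $v\in\widehat{\mathbb{C}}$ with $f_1^n(v)=\infty$, the local degree satisfies $\deg(f_1^n,v)=2$; equivalently, every $a$-flower of level $n\ge1$ has degree $2$.
   Context: $\operatorname{post}(f_1)=\{-1,1,\infty\}$. An $n$-vertex is a point of $f_1^{-n}(\{-1,1,\infty\})$; it is of type $a$ if $f_1^n(v)=\infty$. The flower $W^n(v)$ of an $n$-vertex $v$ is the union of the closures of the components of $\widehat{\mathbb{C}}\setminus f_1^{-n}(\widehat{\mathbb{R}})$ that contain $v$, and its degree is $\deg(f_1^n,v)$; an $a$-flower is a flower centered at an $n$-vertex of type $a$. *)

theory Defs
  imports "HOL-Complex_Analysis.Complex_Analysis"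
begin

text \<open>The Riemann sphere is modelled as complex option, None being the point at infinity.\<close>

type_synonym sphere = "complex option"

text \<open>Its poles in the plane are exactly the zeros of the denominator (the numerator does not
  vanish there), and its value at infinity is the limit 2 - 1 = 1.\<close>

definition f1 :: "sphere \<Rightarrow> sphere" where
  "f1 p = (case p of
      None \<Rightarrow> Some 1
    | Some z \<Rightarrow> (if z\<^sup>2 * (z\<^sup>2 - 9/8)\<^sup>2 = 0 then None
                 else Some (2 * (z\<^sup>2 - 3/4) ^ 3 / (z\<^sup>2 * (z\<^sup>2 - 9/8)\<^sup>2) - 1)))"

text \<open>Standard local coordinates of the sphere: around a finite point a the coordinate is
  z - a, around infinity it is 1/z.  (chart p q is the coordinate of q in the chart
  centred at p; the value chart (Some a) None is junk and irrelevant locally.)\<close>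

definition chart :: "sphere \<Rightarrow> sphere \<Rightarrow> complex" where
  "chart p q = (case p of
      Some a \<Rightarrow> (case q of Some z \<Rightarrow> z - a | None \<Rightarrow> 0)
    | None \<Rightarrow> (case q of Some z \<Rightarrow> 1 / z | None \<Rightarrow> 0))"

definition chart_inv :: "sphere \<Rightarrow> complex \<Rightarrow> sphere" where
  "chart_inv p w = (case p of
      Some a \<Rightarrow> Some (a + w)
    | None \<Rightarrow> (if w = 0 then None else Some (1 / w)))"

definition local_deg :: "(sphere \<Rightarrow> sphere) \<Rightarrow> sphere \<Rightarrow> int" where
  "local_deg g v = zorder (\<lambda>w. chart (g v) (g (chart_inv v w))) 0"

end

theory Submission
  imports Defs
begin
definition Dp :: "complex \<Rightarrow> complex" where "Dp z = z\<^sup>2 * (z\<^sup>2 - 9/8)\<^sup>2"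
definition fc :: "complex \<Rightarrow> complex" where "fc z = 2 * (z\<^sup>2 - 3/4) ^ 3 / (z\<^sup>2 * (z\<^sup>2 - 9/8)\<^sup>2) - 1"

lemma f1_Some: "f1 (Some z) = (if Dp z = 0 then None else Some (fc z))"
  by (simp add: f1_def Dp_def fc_def)

lemma fc_deriv:
  assumes "Dp c \<noteq> 0"
  shows "(fc has_field_derivative (-(27/8)*(c\<^sup>2-3/4)\<^sup>2/(c^3*(c\<^sup>2-9/8)^3))) (at c)"
proof -
  have c0: "c \<noteq> 0" and c1: "c\<^sup>2 - 9/8 \<noteq> 0" using assms by (auto simp: Dp_def)
  have d: "(fc has_field_derivative
     (2*(3*(c\<^sup>2-3/4)^2*(2*c))*(c\<^sup>2*(c\<^sup>2-9/8)\<^sup>2) - 2*(c\<^sup>2-3/4)^3*(2*c*(c\<^sup>2-9/8)\<^sup>2 + c\<^sup>2*(2*(c\<^sup>2-9/8)*(2*c))))/(c\<^sup>2*(c\<^sup>2-9/8)\<^sup>2)\<^sup>2) (at c)"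
    unfolding fc_def[abs_def]
    by (rule derivative_eq_intros refl | use c0 c1 in \<open>simp; fail\<close>)+ (simp add: field_simps)
  have e: "(2*(3*(c\<^sup>2-3/4)^2*(2*c))*(c\<^sup>2*(c\<^sup>2-9/8)\<^sup>2) - 2*(c\<^sup>2-3/4)^3*(2*c*(c\<^sup>2-9/8)\<^sup>2 + c\<^sup>2*(2*(c\<^sup>2-9/8)*(2*c))))/(c\<^sup>2*(c\<^sup>2-9/8)\<^sup>2)\<^sup>2
     = (-(27/8)*(c\<^sup>2-3/4)\<^sup>2/(c^3*(c\<^sup>2-9/8)^3))"
    using c0 c1 by (simp add: field_simps) algebra
  show ?thesis using d e by simp
qed

lemma f1_None: "f1 None = Some 1" by (simp add: f1_def)
lemma f1_one: "f1 (Some 1) = Some 1" by (simp add: f1_def power_divide)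
lemma f1_mone: "f1 (Some (-1)) = Some 1" by (simp add: f1_def power_divide)
lemma f1_crit: assumes h: "c\<^sup>2 = 3/4" shows "f1 (Some c) = Some (-1)"
proof -
  have "c \<noteq> 0" using h by auto
  moreover have "c\<^sup>2 - 9/8 = -3/8" unfolding h by simp
  then have "c\<^sup>2 - 9/8 \<noteq> 0" by simp
  ultimately show ?thesis by (simp add: f1_def h)
qed

definition inS :: "sphere \<Rightarrow> bool" where "inS x \<longleftrightarrow> x = Some 1 \<or> x = Some (-1)"

lemma stayS: "inS x \<Longrightarrow> inS ((f1^^d) x)"
  by (induction d) (auto simp: inS_def f1_one f1_mone)

lemma reachS: assumes "inS ((f1^^j) x)" "j \<le> i" shows "(f1^^i) x \<noteq> None"
proof -
  have "(f1^^i) x = (f1^^(i-j)) ((f1^^j) x)" using assms(2)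
    by (metis funpow_add le_add_diff_inverse2 o_apply)
  then show ?thesis using stayS[OF assms(1), of "i-j"] by (auto simp: inS_def)
qed

lemma orbit_local:
  assumes "\<forall>j<k. \<exists>c. (f1^^j) (Some a) = Some c \<and> Dp c \<noteq> 0 \<and> c\<^sup>2 \<noteq> 3/4"
  shows "\<exists>G r. r > 0 \<and> G holomorphic_on ball a r \<and> (\<forall>z\<in>ball a r. (f1^^k) (Some z) = Some (G z)) \<and> deriv G a \<noteq> 0"
  using assms
proof (induction k)
  case 0
  show ?case by (rule exI[of _ "\<lambda>z. z"], rule exI[of _ 1]) auto
next
  case (Suc k)
  then obtain G r where r: "r > 0" and hol: "G holomorphic_on ball a r"
    and eq: "\<forall>z\<in>ball a r. (f1^^k) (Some z) = Some (G z)" and dG: "deriv G a \<noteq> 0"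
    by auto
  from Suc.prems obtain c where c: "(f1^^k) (Some a) = Some c" "Dp c \<noteq> 0" "c\<^sup>2 \<noteq> 3/4" by auto
  have Ga: "G a = c" using eq c r by auto
  have opD: "open {y. Dp y \<noteq> 0}"
  proof -
    have "continuous_on UNIV Dp" by (auto intro!: continuous_intros simp: Dp_def[abs_def])
    then have "open (Dp -` (-{0}))" by (rule open_vimage[rotated]) auto
    moreover have "Dp -` (-{0}) = {y. Dp y \<noteq> 0}" by auto
    ultimately show ?thesis by simp
  qed
  have contG: "continuous_on (ball a r) G" using hol holomorphic_on_imp_continuous_on by blast
  have "open (ball a r \<inter> G -` {y. Dp y \<noteq> 0})"
    using continuous_open_preimage[OF contG open_ball opD] .
  moreover have "a \<in> ball a r \<inter> G -` {y. Dp y \<noteq> 0}" using r Ga c by auto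
  ultimately obtain r' where r': "r' > 0" "ball a r' \<subseteq> ball a r \<inter> G -` {y. Dp y \<noteq> 0}"
    by (meson openE)
  have holfc: "fc holomorphic_on {y. Dp y \<noteq> 0}"
    unfolding fc_def[abs_def] by (auto intro!: holomorphic_intros simp: Dp_def)
  have hol': "G holomorphic_on ball a r'" using hol r' holomorphic_on_subset by blast
  have "(fc \<circ> G) holomorphic_on ball a r'"
    by (rule holomorphic_on_compose_gen[OF hol' holfc]) (use r' in auto)
  moreover have "\<forall>z\<in>ball a r'. (f1^^Suc k) (Some z) = Some ((fc \<circ> G) z)"
  proof
    fix z assume z: "z \<in> ball a r'"
    then have "z \<in> ball a r" "Dp (G z) \<noteq> 0" using r' by auto
    then show "(f1^^Suc k) (Some z) = Some ((fc \<circ> G) z)" using eq by (simp add: f1_Some)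
  qed
  moreover have "deriv (fc \<circ> G) a \<noteq> 0"
  proof -
    have dG': "(G has_field_derivative deriv G a) (at a)"
      using holomorphic_derivI[OF hol open_ball] r by auto
    have c0: "c \<noteq> 0" and c1: "c\<^sup>2 - 9/8 \<noteq> 0" using c by (auto simp: Dp_def)
    have "((fc \<circ> G) has_field_derivative (-(27/8)*(c\<^sup>2-3/4)\<^sup>2/(c^3*(c\<^sup>2-9/8)^3)) * deriv G a) (at a)"
      using DERIV_chain[OF fc_deriv[OF c(2)[folded Ga]] dG'] unfolding Ga .
    then have "deriv (fc \<circ> G) a = (-(27/8)*(c\<^sup>2-3/4)\<^sup>2/(c^3*(c\<^sup>2-9/8)^3)) * deriv G a"
      by (rule DERIV_imp_deriv)
    then show ?thesis using c0 c1 c(3) dG by simp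
  qed
  ultimately show ?case using r' by blast
qed

theorem lemma5p1:
  fixes n :: nat and v :: sphere
  assumes "n \<ge> 1" and "(f1 ^^ n) v = None"
  shows "local_deg (f1 ^^ n) v = 2"
proof -
  obtain m where nm: "n = Suc m" using assms(1) by (cases n) auto
  have vNone: "v \<noteq> None"
  proof
    assume "v = None"
    then have "inS ((f1^^1) v)" by (simp add: f1_None inS_def)
    then show False using reachS[of 1 v n] assms by auto
  qed
  then obtain a where va: "v = Some a" by auto
  have nn: "(f1^^j) (Some a) \<noteq> None" if "j \<le> m" for j
  proof
    assume h: "(f1^^j) (Some a) = None"
    have "inS ((f1^^Suc j) (Some a))" using h by (simp add: f1_None inS_def)
    then show False using reachS[of "Suc j" "Some a" n] assms va nm that by auto
  qed
  have good: "\<forall>j<m. \<exists>c. (f1^^j) (Some a) = Some c \<and> Dp c \<noteq> 0 \<and> c\<^sup>2 \<noteq> 3/4"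
  proof (intro allI impI)
    fix j assume j: "j < m"
    then obtain c where c: "(f1^^j) (Some a) = Some c" using nn by fastforce
    have "Dp c \<noteq> 0"
    proof
      assume "Dp c = 0"
      then have "(f1^^Suc j) (Some a) = None" using c by (simp add: f1_Some)
      then show False using nn[of "Suc j"] j by auto
    qed
    moreover have "c\<^sup>2 \<noteq> 3/4"
    proof
      assume "c\<^sup>2 = 3/4"
      then have "inS ((f1^^Suc j) (Some a))" using c f1_crit by (simp add: inS_def)
      then show False using reachS[of "Suc j" "Some a" n] assms va nm j by auto
    qed
    ultimately show "\<exists>c. (f1^^j) (Some a) = Some c \<and> Dp c \<noteq> 0 \<and> c\<^sup>2 \<noteq> 3/4" using c by blast
  qed
  obtain p where p: "(f1^^m) (Some a) = Some p" using nn[of m] by auto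
  have Dp0: "Dp p = 0"
  proof (rule ccontr)
    assume "Dp p \<noteq> 0"
    then have "(f1^^n) (Some a) \<noteq> None" using p nm by (simp add: f1_Some)
    then show False using assms va by simp
  qed
  obtain G r where r: "r > 0" and hol: "G holomorphic_on ball a r"
    and eq: "\<forall>z\<in>ball a r. (f1^^m) (Some z) = Some (G z)" and dG: "deriv G a \<noteq> 0"
    using orbit_local[OF good] by auto
  have Ga: "G a = p" using eq p r by auto
  define K where "K = (\<lambda>z. if z = a then deriv G a else (G z - G a) / (z - a))"
  have holK: "K holomorphic_on ball a r" unfolding K_def
    by (rule pole_lemma[OF hol]) (use r in auto)
  have KG: "G z - p = (z - a) * K z" for z
    using Ga by (auto simp: K_def)
  have pcases: "p = 0 \<or> p\<^sup>2 = 9/8" using Dp0 by (auto simp: Dp_def)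
  define E where "E = (\<lambda>y::complex. if p = 0 then (y\<^sup>2 - 9/8)\<^sup>2 else y\<^sup>2 * (y + p)\<^sup>2)"
  have DE: "Dp y = (y - p)\<^sup>2 * E y" for y
  proof (cases "p = 0")
    case True then show ?thesis by (simp add: E_def Dp_def)
  next
    case False
    then have p2: "p\<^sup>2 = 9/8" using pcases by auto
    have "(y - p)\<^sup>2 * (y\<^sup>2 * (y + p)\<^sup>2) = y\<^sup>2 * (y\<^sup>2 - p\<^sup>2)\<^sup>2" by algebra
    also have "\<dots> = Dp y" unfolding p2 Dp_def ..
    finally show ?thesis using False by (simp add: E_def)
  qed
  have Ep: "E p \<noteq> 0"
    using pcases by (auto simp: E_def)
  define Nm where "Nm = (\<lambda>y::complex. 2 * (y\<^sup>2 - 3/4)^3 - Dp y)"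
  have Np: "Nm p \<noteq> 0"
  proof (cases "p = 0")
    case True then show ?thesis by (simp add: Nm_def Dp_def)
  next
    case False
    then have p2: "p\<^sup>2 = 9/8" using pcases by auto
    show ?thesis unfolding Nm_def Dp0 p2 by simp
  qed
  define Q where "Q = (\<lambda>z. K z * E (G z) * Nm (G z))"
  have holQ: "Q holomorphic_on ball a r"
    unfolding Q_def E_def Nm_def Dp_def using holK hol
    by (cases "p = 0") (auto intro!: holomorphic_intros)
  define S where "S = ball a r \<inter> Q -` (-{0})"
  have openS: "open S" unfolding S_def
    by (rule continuous_open_preimage[OF holomorphic_on_imp_continuous_on[OF holQ]]) auto
  have aS: "a \<in> S" using r dG Ep Np Ga by (simp add: S_def Q_def K_def)
  define H where "H = (\<lambda>z. K z ^ 2 * E (G z) / Nm (G z))"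
  have holH: "H holomorphic_on S"
  proof -
    have "K holomorphic_on S" "G holomorphic_on S" using holK hol S_def holomorphic_on_subset by auto
    moreover have "\<forall>z\<in>S. Nm (G z) \<noteq> 0" by (auto simp: S_def Q_def)
    ultimately show ?thesis
      unfolding H_def E_def Nm_def Dp_def
      by (cases "p = 0") (auto intro!: holomorphic_intros)
  qed
  have Ha: "H a \<noteq> 0" using dG Ep Np Ga by (simp add: H_def K_def)
  define h0 where "h0 = (\<lambda>z. chart None ((f1^^n) (Some z)))"
  have h0eq: "h0 z = H z * (z - a) powi 2" if z: "z \<in> S" "z \<noteq> a" for z
  proof -
    have zb: "z \<in> ball a r" and Qz: "Q z \<noteq> 0" using z by (auto simp: S_def)
    then have Kz: "K z \<noteq> 0" and Ez: "E (G z) \<noteq> 0" and Nz: "Nm (G z) \<noteq> 0" by (auto simp: Q_def)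
    have "G z - p \<noteq> 0" using KG[of z] Kz z by auto
    then have Dz: "Dp (G z) \<noteq> 0" using DE[of "G z"] Ez by auto
    have "(f1^^n) (Some z) = f1 (Some (G z))" using eq zb nm by simp
    also have "\<dots> = Some (fc (G z))" using Dz by (simp add: f1_Some)
    finally have "h0 z = 1 / fc (G z)" by (simp add: h0_def chart_def)
    also have "fc (G z) = Nm (G z) / Dp (G z)"
      using Dz by (simp add: fc_def Nm_def Dp_def field_simps)
    also have "1 / (Nm (G z) / Dp (G z)) = Dp (G z) / Nm (G z)" by simp
    also have "\<dots> = (z - a)\<^sup>2 * K z ^ 2 * E (G z) / Nm (G z)"
      using DE[of "G z"] KG[of z] by (simp add: power_mult_distrib)
    also have "\<dots> = H z * (z - a) powi 2" by (simp add: H_def)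
    finally show ?thesis .
  qed
  have "zorder h0 a = 2"
    by (rule zorder_eqI[OF openS aS holH Ha h0eq])
  moreover have "local_deg (f1 ^^ n) v = zorder (\<lambda>u. h0 (u + a)) 0"
    unfolding local_deg_def using assms(2) va
    by (simp add: h0_def chart_inv_def add.commute)
  ultimately show ?thesis using zorder_shift[of h0 a] by simp
qed
end
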